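(* With the natural actions of the symmetric groups, the maps $\phi^0$ and $\phi^1$ are injective morphisms of symmetric set-operads from $\mathcal{FF}^\Sigma$ to the symmetric set-operads underlying $\mathrm{Mould}_0^\Sigma$ and $\mathrm{Mould}_1^\Sigma$, respectively.
   Context: $\mathcal{FF}(n)$ is the set of reduced formal fractions whose numerator and denominator are products of symbols $[S]$, $\emptyset\ne S\subseteq\{1,\dots,n\}$, i.e. the free abelian group written multiplicatively on these symbols. For $F\in\mathcal{FF}(m)$, $G\in\mathcal{FF}(n)$: $F\circ_i G=[S_{i,n}]\,F(1,\dots,i-1,S_{i,n},i+n,\dots,m+n-1)\,G(i,\dots,i+n-1)$, where $S_{i,n}=\{i,\dots,i+n-1\}$ and $F(A_1,\dots,A_m)$ replaces each $[S]$ by $[\bigcup_{k\in S}A_k]$. $\mathcal{FF}^\Sigma$ is $\mathcal{FF}$ with $\sigma\in S_n$ acting by $[S]\mapsto[\sigma(S)]$. $\mathrm{Mould}_0(n)=\mathrm{Mould}_1(n)=\mathbb{Q}(u_1,\dots,u_n)$ with compositions $F\circ_iG=\Sigma_{i,n}F(u_1,\dots,u_{i-1},\Sigma_{i,n},u_{i+n},\dots,u_{m+n-1})G(u_i,\dots,u_{i+n-1})$, $\Sigma_{i,n}=u_i+\dots+u_{i+n-1}$ (for $\mathrm{Mould}_0$), and $F\circ_iG=(\Pi_{i,n}-1)F(u_1,\dots,u_{i-1},\Pi_{i,n},u_{i+n},\dots,u_{m+n-1})G(u_i,\dots,u_{i+n-1})$, $\Pi_{i,n}=u_i\cdots u_{i+n-1}$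 (for $\mathrm{Mould}_1$); $S_n$ acts by permuting the variables $u_1,\dots,u_n$; the superscript $\Sigma$ denotes these symmetric operads. $\phi^0([S])=\sum_{j\in S}u_j$ and $\phi^1([S])=\prod_{j\in S}u_j-1$, extended multiplicatively. *)

theory Defs
  imports Complex_Main "HOL-Library.Poly_Mapping" "HOL-Computational_Algebra.Fraction_Field"
          "HOL-Combinatorics.Permutations"
begin

text \<open>A reduced formal fraction is an element of the free abelian group (written
  multiplicatively) on the symbols [S]; we encode it by its finitely supported exponent
  function S \<mapsto> exponent of [S]. The group product is the sum of exponent functions.\<close>

type_synonym ff = "nat set \<Rightarrow>\<^sub>0 int"

definition FF :: "nat \<Rightarrow> ff set" where
  "FF n = {F. \<forall>S\<in>Poly_Mapping.keys F. S \<noteq> {} \<and> S \<subseteq> {1..n}}"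

definition ff_rename :: "(nat set \<Rightarrow> nat set) \<Rightarrow> ff \<Rightarrow> ff" where
  "ff_rename g F = (\<Sum>S\<in>Poly_Mapping.keys F. Poly_Mapping.single (g S) (Poly_Mapping.lookup F S))"

definition Sint :: "nat \<Rightarrow> nat \<Rightarrow> nat set" where
  "Sint i n = {i..i + n - 1}"

text \<open>The sets A_1,...,A_m used in F(1,...,i-1,S_{i,n},i+n,...,m+n-1).\<close>
definition ff_blocks :: "nat \<Rightarrow> nat \<Rightarrow> nat \<Rightarrow> nat set" where
  "ff_blocks i n k = (if k < i then {k} else if k = i then Sint i n else {k + n - 1})"

definition ff_comp :: "nat \<Rightarrow> ff \<Rightarrow> nat \<Rightarrow> ff \<Rightarrow> ff" where
  "ff_comp i F n G =
     Poly_Mapping.single (Sint i n) 1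
     + ff_rename (\<lambda>S. \<Union>k\<in>S. ff_blocks i n k) F
     + ff_rename (\<lambda>S. (\<lambda>j. j + i - 1) ` S) G"

definition ff_act :: "(nat \<Rightarrow> nat) \<Rightarrow> ff \<Rightarrow> ff" where
  "ff_act \<sigma> F = ff_rename (\<lambda>S. \<sigma> ` S) F"

type_synonym mpoly = "(nat \<Rightarrow>\<^sub>0 nat) \<Rightarrow>\<^sub>0 rat"
type_synonym ratfun = "mpoly fract"

definition mvar :: "nat \<Rightarrow> mpoly" where
  "mvar j = Poly_Mapping.single (Poly_Mapping.single j 1) 1"

definition mconst :: "rat \<Rightarrow> mpoly" where
  "mconst c = Poly_Mapping.single 0 c"

definition mvars :: "mpoly \<Rightarrow> nat set" where
  "mvars p = \<Union> (Poly_Mapping.keys ` Poly_Mapping.keys p)"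

definition u :: "nat \<Rightarrow> ratfun" where
  "u j = Fract (mvar j) 1"

text \<open>Mould(n) = Q(u_1,...,u_n), as a subfield of Q(u_0,u_1,u_2,...).\<close>
definition Mould :: "nat \<Rightarrow> ratfun set" where
  "Mould n = {x. \<exists>a b. b \<noteq> 0 \<and> mvars a \<subseteq> {1..n} \<and> mvars b \<subseteq> {1..n} \<and> x = Fract a b}"

definition poly_subst :: "(nat \<Rightarrow> ratfun) \<Rightarrow> mpoly \<Rightarrow> ratfun" where
  "poly_subst s p =
     (\<Sum>m\<in>Poly_Mapping.keys p. Fract (mconst (Poly_Mapping.lookup p m)) 1 * (\<Prod>v\<in>Poly_Mapping.keys m. s v ^ Poly_Mapping.lookup m v))"

definition rf_subst :: "(nat \<Rightarrow> ratfun) \<Rightarrow> ratfun \<Rightarrow> ratfun" where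
  "rf_subst s x = (SOME r. \<exists>a b. b \<noteq> 0 \<and> x = Fract a b \<and> r = poly_subst s a / poly_subst s b)"

definition Sigma_in :: "nat \<Rightarrow> nat \<Rightarrow> ratfun" where
  "Sigma_in i n = (\<Sum>j\<in>Sint i n. u j)"

definition Pi_in :: "nat \<Rightarrow> nat \<Rightarrow> ratfun" where
  "Pi_in i n = (\<Prod>j\<in>Sint i n. u j)"

definition mould_comp_gen :: "ratfun \<Rightarrow> ratfun \<Rightarrow> nat \<Rightarrow> ratfun \<Rightarrow> nat \<Rightarrow> ratfun \<Rightarrow> ratfun" where
  "mould_comp_gen P Q i F n G =
     P * rf_subst (\<lambda>k. if k < i then u k else if k = i then Q else u (k + n - 1)) F
       * rf_subst (\<lambda>j. u (j + i - 1)) G"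

definition mould0_comp :: "nat \<Rightarrow> ratfun \<Rightarrow> nat \<Rightarrow> ratfun \<Rightarrow> ratfun" where
  "mould0_comp i F n G = mould_comp_gen (Sigma_in i n) (Sigma_in i n) i F n G"

definition mould1_comp :: "nat \<Rightarrow> ratfun \<Rightarrow> nat \<Rightarrow> ratfun \<Rightarrow> ratfun" where
  "mould1_comp i F n G = mould_comp_gen (Pi_in i n - 1) (Pi_in i n) i F n G"

definition mould_act :: "(nat \<Rightarrow> nat) \<Rightarrow> ratfun \<Rightarrow> ratfun" where
  "mould_act \<sigma> x = rf_subst (\<lambda>j. u (\<sigma> j)) x"

definition phi_gen :: "(nat set \<Rightarrow> ratfun) \<Rightarrow> ff \<Rightarrow> ratfun" where
  "phi_gen f F = (\<Prod>S\<in>Poly_Mapping.keys F. f S powi Poly_Mapping.lookup F S)"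

definition phi0 :: "ff \<Rightarrow> ratfun" where
  "phi0 = phi_gen (\<lambda>S. \<Sum>j\<in>S. u j)"

definition phi1 :: "ff \<Rightarrow> ratfun" where
  "phi1 = phi_gen (\<lambda>S. (\<Prod>j\<in>S. u j) - 1)"

definition injective_sym_operad_morphism ::
  "(ff \<Rightarrow> ratfun) \<Rightarrow> (nat \<Rightarrow> ratfun \<Rightarrow> nat \<Rightarrow> ratfun \<Rightarrow> ratfun) \<Rightarrow> bool" where
  "injective_sym_operad_morphism \<phi> cmp \<longleftrightarrow>
     (\<forall>n\<ge>1. \<forall>F\<in>FF n. \<phi> F \<in> Mould n)
   \<and> \<phi> 0 = 1
   \<and> (\<forall>m\<ge>1. \<forall>n\<ge>1. \<forall>i\<in>{1..m}. \<forall>F\<in>FF m. \<forall>G\<in>FF n.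
        \<phi> (ff_comp i F n G) = cmp i (\<phi> F) n (\<phi> G))
   \<and> (\<forall>n\<ge>1. \<forall>\<sigma>. \<sigma> permutes {1..n} \<longrightarrow> (\<forall>F\<in>FF n. \<phi> (ff_act \<sigma> F) = mould_act \<sigma> (\<phi> F)))
   \<and> (\<forall>n\<ge>1. inj_on \<phi> (FF n))"

end

theory Submission
  imports Defs
begin

abbreviation lk where "lk \<equiv> Poly_Mapping.lookup"
abbreviation ks where "ks \<equiv> Poly_Mapping.keys"

definition mnm :: "(nat \<Rightarrow> 'a::comm_ring_1) \<Rightarrow> (nat \<Rightarrow>\<^sub>0 nat) \<Rightarrow> 'a" where
  "mnm s m = (\<Prod>v\<in>ks m. s v ^ lk m v)"

definition ev :: "(rat \<Rightarrow> 'a::comm_ring_1) \<Rightarrow> (nat \<Rightarrow> 'a) \<Rightarrow> mpoly \<Rightarrow> 'a" where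
  "ev h s p = (\<Sum>m\<in>ks p. h (lk p m) * mnm s m)"

definition chom :: "(rat \<Rightarrow> 'a::comm_ring_1) \<Rightarrow> bool" where
  "chom h \<longleftrightarrow> h 0 = 0 \<and> h 1 = 1 \<and> (\<forall>a b. h (a + b) = h a + h b) \<and> (\<forall>a b. h (a * b) = h a * h b)"

lemma mnm_K:
  assumes "finite K" "ks m \<subseteq> K"
  shows "mnm s m = (\<Prod>v\<in>K. s v ^ lk m v)"
  unfolding mnm_def
  by (rule prod.mono_neutral_left) (use assms in \<open>auto simp: in_keys_iff\<close>)

lemma mnm_add: "mnm s (a + b) = mnm s a * mnm s b"
proof -
  let ?K = "ks a \<union> ks b"
  have "mnm s (a + b) = (\<Prod>v\<in>?K. s v ^ lk (a+b) v)"
    by (rule mnm_K) (auto simp: keys_add)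
  also have "\<dots> = (\<Prod>v\<in>?K. s v ^ lk a v) * (\<Prod>v\<in>?K. s v ^ lk b v)"
    by (simp add: lookup_add power_add prod.distrib)
  also have "\<dots> = mnm s a * mnm s b"
    by (simp add: mnm_K[of ?K])
  finally show ?thesis .
qed

lemma mnm_0 [simp]: "mnm s 0 = 1"
  by (simp add: mnm_def)

lemma ev_K:
  assumes "finite K" "ks p \<subseteq> K" "h 0 = 0"
  shows "ev h s p = (\<Sum>m\<in>K. h (lk p m) * mnm s m)"
  unfolding ev_def
  by (rule sum.mono_neutral_left) (use assms in \<open>auto simp: in_keys_iff\<close>)

lemma ev_add:
  assumes "chom h" shows "ev h s (p + q) = ev h s p + ev h s q"
proof -
  have h0: "h 0 = 0" and ha: "\<And>a b. h (a + b) = h a + h b" using assms by (auto simp: chom_def)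
  let ?K = "ks p \<union> ks q"
  have "ev h s (p + q) = (\<Sum>m\<in>?K. h (lk (p+q) m) * mnm s m)"
    by (rule ev_K) (auto simp: keys_add h0)
  also have "\<dots> = (\<Sum>m\<in>?K. h (lk p m) * mnm s m) + (\<Sum>m\<in>?K. h (lk q m) * mnm s m)"
    by (simp add: lookup_add ha distrib_right sum.distrib)
  also have "\<dots> = ev h s p + ev h s q"
    by (simp add: ev_K[of ?K] h0)
  finally show ?thesis .
qed

lemma ev_0 [simp]: "ev h s 0 = 0"
  by (simp add: ev_def)

lemma ev_single:
  assumes "chom h" shows "ev h s (Poly_Mapping.single m c) = h c * mnm s m"
  using assms by (cases "c = 0") (auto simp: ev_def chom_def)

lemma ev_sum:
  assumes "chom h" shows "ev h s (\<Sum>x\<in>A. f x) = (\<Sum>x\<in>A. ev h s (f x))"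
  by (induction A rule: infinite_finite_induct) (auto simp: ev_add[OF assms])

lemma pm_expand: "p = (\<Sum>m\<in>ks p. Poly_Mapping.single m (lk p m))"
  by (rule poly_mapping_eqI) (auto simp: lookup_sum lookup_single when_def in_keys_iff)

lemma ev_mult:
  assumes "chom h" shows "ev h s (p * q) = ev h s p * ev h s q"
proof -
  have hm: "\<And>a b. h (a * b) = h a * h b" using assms by (auto simp: chom_def)
  have "p * q = (\<Sum>m\<in>ks p. Poly_Mapping.single m (lk p m)) * (\<Sum>m\<in>ks q. Poly_Mapping.single m (lk q m))"
    using pm_expand[of p] pm_expand[of q] by simp
  also have "\<dots> = (\<Sum>a\<in>ks p. \<Sum>b\<in>ks q. Poly_Mapping.single (a + b) (lk p a * lk q b))"
    by (simp add: sum_product mult_single)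
  finally have "ev h s (p * q) = (\<Sum>a\<in>ks p. \<Sum>b\<in>ks q. h (lk p a) * mnm s a * (h (lk q b) * mnm s b))"
    by (simp add: ev_sum[OF assms] ev_single[OF assms] hm mnm_add algebra_simps)
  also have "\<dots> = ev h s p * ev h s q"
    by (simp add: ev_def sum_product)
  finally show ?thesis .
qed

lemma ev_one [simp]: "chom h \<Longrightarrow> ev h s 1 = 1"
  by (simp add: ev_def chom_def)

lemma ev_mvar [simp]: "chom h \<Longrightarrow> ev h s (mvar j) = s j"
  by (simp add: mvar_def ev_single mnm_def chom_def)

lemma ev_mconst [simp]: "chom h \<Longrightarrow> ev h s (mconst c) = h c"
  by (simp add: mconst_def ev_single)

lemma ev_uminus: "chom h \<Longrightarrow> ev h s (- p) = - ev h s p"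
  using ev_add[of h s p "-p"] by (simp add: eq_neg_iff_add_eq_0 add.commute)

lemma ev_diff: "chom h \<Longrightarrow> ev h s (p - q) = ev h s p - ev h s q"
  using ev_add[of h s p "-q"] ev_uminus[of h s q] by simp

lemma ev_prod: "chom h \<Longrightarrow> ev h s (\<Prod>x\<in>A. f x) = (\<Prod>x\<in>A. ev h s (f x))"
  by (induction A rule: infinite_finite_induct) (auto simp: ev_mult)

lemma ev_power: "chom h \<Longrightarrow> ev h s (p ^ k) = ev h s p ^ k"
  by (induction k) (auto simp: ev_mult)

definition rhom :: "('a::comm_ring_1 \<Rightarrow> 'b::comm_ring_1) \<Rightarrow> bool" where
  "rhom g \<longleftrightarrow> g 0 = 0 \<and> g 1 = 1 \<and> (\<forall>a b. g (a + b) = g a + g b) \<and> (\<forall>a b. g (a * b) = g a * g b)"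

lemma rhom_sum: "rhom g \<Longrightarrow> g (\<Sum>x\<in>A. f x) = (\<Sum>x\<in>A. g (f x))"
  by (induction A rule: infinite_finite_induct) (auto simp: rhom_def)

lemma rhom_prod: "rhom g \<Longrightarrow> g (\<Prod>x\<in>A. f x) = (\<Prod>x\<in>A. g (f x))"
  by (induction A rule: infinite_finite_induct) (auto simp: rhom_def)

lemma rhom_power: "rhom g \<Longrightarrow> g (x ^ k) = g x ^ k"
  by (induction k) (auto simp: rhom_def)

lemma ev_comp:
  assumes "rhom g" "\<And>c. g (h1 c) = h2 c"
  shows "g (ev h1 s p) = ev h2 (\<lambda>j. g (s j)) p"
  using assms(1) by (simp add: ev_def mnm_def rhom_sum rhom_prod rhom_power assms(2) rhom_def[of g])

lemma chom_mconst: "chom mconst"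
  by (simp add: chom_def mconst_def single_add mult_single)

lemma rhom_ev: "chom h \<Longrightarrow> rhom (ev h s)"
  by (simp add: rhom_def ev_add ev_mult)

lemma ev_ev:
  assumes "chom h"
  shows "ev h t (ev mconst s p) = ev h (\<lambda>j. ev h t (s j)) p"
  by (rule ev_comp) (use assms in \<open>simp_all add: rhom_ev\<close>)

lemma mvar_power: "mvar v ^ k = Poly_Mapping.single (Poly_Mapping.single v k) 1"
  by (induction k) (simp_all add: mvar_def mult_single single_add[symmetric] add.commute)

lemma prod_single_one:
  "(\<Prod>x\<in>A. Poly_Mapping.single (f x) (1::rat)) = Poly_Mapping.single (\<Sum>x\<in>A. f x) 1"
  by (induction A rule: infinite_finite_induct) (simp_all add: mult_single)

lemma mnm_mvar: "mnm mvar m = Poly_Mapping.single m 1"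
proof -
  have "mnm mvar m = Poly_Mapping.single (\<Sum>v\<in>ks m. Poly_Mapping.single v (lk m v)) 1"
    by (simp add: mnm_def mvar_power prod_single_one)
  also have "\<dots> = Poly_Mapping.single m 1"
    using pm_expand[of m] by simp
  finally show ?thesis .
qed

lemma ev_id: "ev mconst mvar p = p"
proof -
  have "ev mconst mvar p = (\<Sum>m\<in>ks p. Poly_Mapping.single m (lk p m))"
    by (simp add: ev_def mnm_mvar mconst_def mult_single)
  then show ?thesis using pm_expand[of p] by simp
qed

definition hF :: "rat \<Rightarrow> ratfun" where "hF c = Fract (mconst c) 1"
definition emb :: "mpoly \<Rightarrow> ratfun" where "emb p = Fract p 1"

lemma chom_hF: "chom hF"
  by (simp add: chom_def hF_def mconst_def single_add mult_single fract_collapse)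

lemma rhom_emb: "rhom emb"
  by (simp add: rhom_def emb_def fract_collapse)

lemma emb_eq_iff [simp]: "emb a = emb b \<longleftrightarrow> a = b"
  by (simp add: emb_def eq_fract)

lemma emb_0_iff [simp]: "emb a = 0 \<longleftrightarrow> a = 0"
  by (simp add: emb_def eq_fract fract_collapse(1)[symmetric, of 1])

lemma poly_subst_ev: "poly_subst s p = ev hF s p"
  by (simp add: poly_subst_def ev_def mnm_def hF_def)

lemma poly_subst_emb:
  "poly_subst (\<lambda>j. emb (s' j)) p = emb (ev mconst s' p)"
  unfolding poly_subst_ev
  by (rule ev_comp[symmetric, OF rhom_emb]) (simp add: hF_def emb_def)

definition goodsubst :: "(nat \<Rightarrow> ratfun) \<Rightarrow> bool" where
  "goodsubst s \<longleftrightarrow> (\<forall>b. b \<noteq> 0 \<longrightarrow> poly_subst s b \<noteq> 0)"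

lemma goodsubstI:
  assumes "\<And>j. s j = emb (s' j)" "\<And>j. ev mconst t (s' j) = mvar j"
  shows "goodsubst s"
  unfolding goodsubst_def
proof (intro allI impI)
  fix b :: mpoly assume b: "b \<noteq> 0"
  have "s = (\<lambda>j. emb (s' j))" using assms(1) by auto
  hence e: "poly_subst s b = emb (ev mconst s' b)" by (simp add: poly_subst_emb)
  have "ev mconst t (ev mconst s' b) = ev mconst mvar b"
    by (simp add: ev_ev chom_mconst assms(2))
  hence "ev mconst t (ev mconst s' b) = b" by (simp add: ev_id)
  hence "ev mconst s' b \<noteq> 0" using b by auto
  thus "poly_subst s b \<noteq> 0" by (simp add: e)
qed

lemma poly_subst_1 [simp]: "poly_subst s 1 = 1"
  by (simp add: poly_subst_ev chom_hF)

lemma rf_subst_Fract: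
  assumes g: "goodsubst s" and b: "b \<noteq> 0"
  shows "rf_subst s (Fract a b) = poly_subst s a / poly_subst s b"
  unfolding rf_subst_def
proof (rule some_equality)
  show "\<exists>a' b'. b' \<noteq> 0 \<and> Fract a b = Fract a' b' \<and> poly_subst s a / poly_subst s b = poly_subst s a' / poly_subst s b'"
    using b by blast
next
  fix r assume "\<exists>a' b'. b' \<noteq> 0 \<and> Fract a b = Fract a' b' \<and> r = poly_subst s a' / poly_subst s b'"
  then obtain a' b' where b': "b' \<noteq> 0" and eq: "Fract a b = Fract a' b'" and r: "r = poly_subst s a' / poly_subst s b'"
    by blast
  have "a * b' = a' * b" using eq b b' by (simp add: eq_fract)
  hence "poly_subst s a * poly_subst s b' = poly_subst s a' * poly_subst s b"
    by (metis poly_subst_ev ev_mult chom_hF)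
  moreover have "poly_subst s b \<noteq> 0" "poly_subst s b' \<noteq> 0" using g b b' by (auto simp: goodsubst_def)
  ultimately show "r = poly_subst s a / poly_subst s b"
    by (simp add: r divide_eq_eq field_simps)
qed

lemma rf_subst_emb: "goodsubst s \<Longrightarrow> rf_subst s (emb a) = poly_subst s a"
  by (simp add: emb_def rf_subst_Fract)

lemma rf_subst_zero [simp]: "goodsubst s \<Longrightarrow> rf_subst s 0 = 0"
  using rf_subst_emb[of s 0] by (simp add: emb_def fract_collapse poly_subst_ev)

lemma rf_subst_mult:
  assumes "goodsubst s" shows "rf_subst s (x * y) = rf_subst s x * rf_subst s y"
proof -
  obtain a b where x: "x = Fract a b" "b \<noteq> 0" by (cases x)
  obtain c d where y: "y = Fract c d" "d \<noteq> 0" by (cases y)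
  show ?thesis using x y assms
    by (simp add: rf_subst_Fract poly_subst_ev ev_mult chom_hF)
qed

lemma rf_subst_one [simp]: "goodsubst s \<Longrightarrow> rf_subst s 1 = 1"
  using rf_subst_emb[of s 1] by (simp add: emb_def fract_collapse)

lemma rf_subst_inverse:
  assumes g: "goodsubst s" shows "rf_subst s (inverse x) = inverse (rf_subst s x)"
proof -
  obtain a b where x: "x = Fract a b" "b \<noteq> 0" by (cases x)
  show ?thesis
  proof (cases "a = 0")
    case True
    then show ?thesis using x g
      by (simp add: rf_subst_Fract fract_collapse poly_subst_ev)
  next
    case False
    then show ?thesis using x g by (simp add: rf_subst_Fract)
  qed
qed

lemma rf_subst_power: "goodsubst s \<Longrightarrow> rf_subst s (x ^ k) = rf_subst s x ^ k"
  by (induction k) (simp_all add: rf_subst_mult)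

lemma rf_subst_powi: "goodsubst s \<Longrightarrow> rf_subst s (x powi k) = rf_subst s x powi k"
  by (simp add: power_int_def rf_subst_power rf_subst_inverse)

lemma rf_subst_prod: "goodsubst s \<Longrightarrow> rf_subst s (\<Prod>x\<in>A. f x) = (\<Prod>x\<in>A. rf_subst s (f x))"
  by (induction A rule: infinite_finite_induct) (simp_all add: rf_subst_mult)

lemma phi_gen_K:
  assumes "finite K" "ks F \<subseteq> K"
  shows "phi_gen f F = (\<Prod>S\<in>K. f S powi lk F S)"
  unfolding phi_gen_def
  by (rule prod.mono_neutral_left) (use assms in \<open>auto simp: in_keys_iff\<close>)

lemma phi_gen_add:
  assumes "\<forall>S\<in>ks F \<union> ks G. f S \<noteq> 0"
  shows "phi_gen f (F + G) = phi_gen f F * phi_gen f G"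
proof -
  let ?K = "ks F \<union> ks G"
  have "phi_gen f (F + G) = (\<Prod>S\<in>?K. f S powi lk (F+G) S)"
    by (rule phi_gen_K) (auto simp: keys_add)
  also have "\<dots> = (\<Prod>S\<in>?K. f S powi lk F S * f S powi lk G S)"
    by (rule prod.cong) (use assms in \<open>auto simp: lookup_add power_int_add\<close>)
  also have "\<dots> = phi_gen f F * phi_gen f G"
    by (simp add: prod.distrib phi_gen_K[of ?K])
  finally show ?thesis .
qed

lemma phi_gen_zero [simp]: "phi_gen f 0 = 1"
  by (simp add: phi_gen_def)

lemma phi_gen_single: "phi_gen f (Poly_Mapping.single S e) = f S powi e"
  by (cases "e = 0") (simp_all add: phi_gen_def)

lemma phi_gen_sum:
  assumes "\<forall>x\<in>A. \<forall>S\<in>ks (G x). f S \<noteq> 0"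
  shows "phi_gen f (\<Sum>x\<in>A. G x) = (\<Prod>x\<in>A. phi_gen f (G x))"
  using assms
proof (induction A rule: infinite_finite_induct)
  case (insert x A)
  have "ks (\<Sum>x\<in>A. G x) \<subseteq> (\<Union>y\<in>A. ks (G y))" by (rule keys_sum)
  hence "\<forall>S\<in>ks (G x) \<union> ks (\<Sum>x\<in>A. G x). f S \<noteq> 0" using insert.prems by blast
  then show ?case using insert by (simp add: phi_gen_add)
qed auto

lemma phi_gen_rename:
  assumes "\<forall>S\<in>ks F. f (g S) \<noteq> 0"
  shows "phi_gen f (ff_rename g F) = (\<Prod>S\<in>ks F. f (g S) powi lk F S)"
  unfolding ff_rename_def
  by (subst phi_gen_sum) (use assms in \<open>auto simp: phi_gen_single\<close>)

lemma rf_subst_phi_gen: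
  assumes "goodsubst s" "\<And>S. f S = emb (L S)"
  shows "rf_subst s (phi_gen f F) = (\<Prod>S\<in>ks F. poly_subst s (L S) powi lk F S)"
  using assms by (simp add: phi_gen_def rf_subst_prod rf_subst_powi rf_subst_emb)

definition L0 :: "nat set \<Rightarrow> mpoly" where "L0 S = (\<Sum>j\<in>S. mvar j)"
definition L1 :: "nat set \<Rightarrow> mpoly" where "L1 S = (\<Prod>j\<in>S. mvar j) - 1"
definition f0 :: "nat set \<Rightarrow> ratfun" where "f0 S = (\<Sum>j\<in>S. u j)"
definition f1 :: "nat set \<Rightarrow> ratfun" where "f1 S = (\<Prod>j\<in>S. u j) - 1"

lemma u_emb: "u j = emb (mvar j)" by (simp add: u_def emb_def)

lemma emb_diff: "emb (a - b) = emb a - emb b" by (simp add: emb_def)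

lemma f0_emb: "f0 S = emb (L0 S)"
  by (simp add: f0_def L0_def u_emb rhom_sum[OF rhom_emb])

lemma f1_emb: "f1 S = emb (L1 S)"
  by (simp add: f1_def L1_def u_emb rhom_prod[OF rhom_emb] emb_diff) (simp add: emb_def fract_collapse)

lemma phi0_eq: "phi0 = phi_gen f0" by (simp add: phi0_def f0_def[abs_def])
lemma phi1_eq: "phi1 = phi_gen f1" by (simp add: phi1_def f1_def[abs_def])

lemma chom_of_rat: "chom (of_rat :: rat \<Rightarrow> real)"
  by (simp add: chom_def of_rat_add of_rat_mult)

lemma ev_L0: "chom h \<Longrightarrow> ev h s (L0 S) = (\<Sum>j\<in>S. s j)"
  by (simp add: L0_def ev_sum)
lemma ev_L1: "chom h \<Longrightarrow> ev h s (L1 S) = (\<Prod>j\<in>S. s j) - 1"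
  by (simp add: L1_def ev_prod ev_diff)

lemma ps_L0: "poly_subst s (L0 S) = (\<Sum>j\<in>S. s j)"
  by (simp add: poly_subst_ev ev_L0 chom_hF)
lemma ps_L1: "poly_subst s (L1 S) = (\<Prod>j\<in>S. s j) - 1"
  by (simp add: poly_subst_ev ev_L1 chom_hF)

lemma f0_nz: assumes "finite T" "T \<noteq> {}" shows "f0 T \<noteq> 0"
proof
  assume "f0 T = 0"
  hence "L0 T = 0" by (simp add: f0_emb)
  hence "ev of_rat (\<lambda>_. 1::real) (L0 T) = 0" by simp
  thus False using assms by (simp add: ev_L0 chom_of_rat)
qed

lemma f1_nz: assumes "finite T" "T \<noteq> {}" shows "f1 T \<noteq> 0"
proof
  assume "f1 T = 0"
  hence "L1 T = 0" by (simp add: f1_emb)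
  hence "ev of_rat (\<lambda>_. 2::real) (L1 T) = 0" by simp
  hence "(2::real) ^ card T = 1" by (simp add: ev_L1 chom_of_rat)
  moreover have "card T > 0" using assms by (simp add: card_gt_0_iff)
  moreover have "(2::real) ^ card T \<ge> 2 ^ 1"
    using \<open>card T > 0\<close> by (intro power_increasing) auto
  ultimately show False by simp
qed

lemma keys_rename: "ks (ff_rename g F) \<subseteq> g ` ks F"
  unfolding ff_rename_def using keys_sum[of "\<lambda>S. Poly_Mapping.single (g S) (lk F S)" "ks F"]
  by (auto split: if_splits)

lemma FF_keys: "F \<in> FF m \<Longrightarrow> S \<in> ks F \<Longrightarrow> S \<noteq> {} \<and> S \<subseteq> {1..m} \<and> finite S"
  by (auto simp: FF_def intro: finite_subset)

lemma blocks_fin: "finite (ff_blocks i n k)"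
  by (simp add: ff_blocks_def Sint_def)

lemma blocks_ne: "n \<ge> 1 \<Longrightarrow> ff_blocks i n k \<noteq> {}"
  by (simp add: ff_blocks_def Sint_def, linarith)

lemma blocks_disj: "n \<ge> 1 \<Longrightarrow> k \<noteq> k' \<Longrightarrow> ff_blocks i n k \<inter> ff_blocks i n k' = {}"
  by (auto simp: ff_blocks_def Sint_def)

lemma phi_comp_lhs:
  assumes nz: "\<And>T. finite T \<Longrightarrow> T \<noteq> {} \<Longrightarrow> f T \<noteq> 0"
    and n: "n \<ge> 1" and F: "F \<in> FF m" and G: "G \<in> FF n"
  shows "phi_gen f (ff_comp i F n G) = f (Sint i n) *
           (\<Prod>S\<in>ks F. f (\<Union>k\<in>S. ff_blocks i n k) powi lk F S) *
           (\<Prod>S\<in>ks G. f ((\<lambda>j. j + i - 1) ` S) powi lk G S)"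
proof -
  let ?A = "Poly_Mapping.single (Sint i n) (1::int)"
  let ?B = "ff_rename (\<lambda>S. \<Union>k\<in>S. ff_blocks i n k) F"
  let ?C = "ff_rename (\<lambda>S. (\<lambda>j. j + i - 1) ` S) G"
  have nA: "\<forall>S\<in>ks ?A. f S \<noteq> 0" using n nz[of "Sint i n"] by (auto simp: Sint_def)
  have nB0: "\<forall>S\<in>ks F. f (\<Union>k\<in>S. ff_blocks i n k) \<noteq> 0"
  proof
    fix S assume S: "S \<in> ks F"
    then obtain k where "k \<in> S" using FF_keys[OF F] by blast
    hence "(\<Union>k\<in>S. ff_blocks i n k) \<noteq> {}" using blocks_ne[OF n] by blast
    moreover have "finite (\<Union>k\<in>S. ff_blocks i n k)" using FF_keys[OF F S] blocks_fin by blast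
    ultimately show "f (\<Union>k\<in>S. ff_blocks i n k) \<noteq> 0" using nz by blast
  qed
  have nC0: "\<forall>S\<in>ks G. f ((\<lambda>j. j + i - 1) ` S) \<noteq> 0"
    using FF_keys[OF G] nz by (metis finite_imageI image_is_empty)
  have nB: "\<forall>S\<in>ks ?B. f S \<noteq> 0" using nB0 keys_rename by fastforce
  have nC: "\<forall>S\<in>ks ?C. f S \<noteq> 0" using nC0 keys_rename by fastforce
  have nAB: "\<forall>S\<in>ks (?A + ?B). f S \<noteq> 0" using nA nB keys_add[of ?A ?B] by blast
  have "phi_gen f (ff_comp i F n G) = phi_gen f (?A + ?B) * phi_gen f ?C"
    unfolding ff_comp_def by (rule phi_gen_add) (use nAB nC in blast)
  also have "\<dots> = phi_gen f ?A * phi_gen f ?B * phi_gen f ?C"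
    by (subst phi_gen_add) (use nA nB in auto)
  finally show ?thesis
    unfolding phi_gen_single phi_gen_rename[of F f "\<lambda>S. \<Union>k\<in>S. ff_blocks i n k", OF nB0]
      phi_gen_rename[of G f "\<lambda>S. (\<lambda>j. j + i - 1) ` S", OF nC0] by simp
qed

lemma goodsubst_rename: "inj \<tau> \<Longrightarrow> goodsubst (\<lambda>j. u (\<tau> j))"
  by (rule goodsubstI[where s'="\<lambda>j. mvar (\<tau> j)" and t="\<lambda>j. mvar (inv \<tau> j)"])
     (simp_all add: u_emb chom_mconst)

lemma inj_shift: "i \<ge> 1 \<Longrightarrow> inj (\<lambda>j::nat. j + i - 1)"
  by (auto simp: inj_def)

definition sF :: "ratfun \<Rightarrow> nat \<Rightarrow> nat \<Rightarrow> nat \<Rightarrow> ratfun" where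
  "sF Q i n = (\<lambda>k. if k < i then u k else if k = i then Q else u (k + n - 1))"

lemma mould_comp_gen_eq:
  "mould_comp_gen P Q i F n G = P * rf_subst (sF Q i n) F * rf_subst (\<lambda>j. u (j + i - 1)) G"
  by (simp add: mould_comp_gen_def sF_def)

lemma Sint_split: "n \<ge> 1 \<Longrightarrow> j \<in> Sint i n \<Longrightarrow> j \<noteq> i \<Longrightarrow> i < j \<and> j < i + n"
  by (auto simp: Sint_def)

lemma i_in_Sint: "n \<ge> 1 \<Longrightarrow> i \<in> Sint i n"
  by (auto simp: Sint_def)

lemma fin_Sint: "finite (Sint i n)" by (simp add: Sint_def)

lemma goodsubst_sF0:
  assumes n: "n \<ge> 1" shows "goodsubst (sF (Sigma_in i n) i n)"
proof (rule goodsubstI[where s'="\<lambda>k. if k < i then mvar k else if k = i then L0 (Sint i n) else mvar (k + n - 1)"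
        and t="\<lambda>j. if j \<le> i then mvar j else if j < i + n then 0 else mvar (j + 1 - n)"])
  fix j
  show "sF (Sigma_in i n) i n j = emb (if j < i then mvar j else if j = i then L0 (Sint i n) else mvar (j + n - 1))"
    by (simp add: sF_def u_emb Sigma_in_def L0_def rhom_sum[OF rhom_emb])
  show "ev mconst (\<lambda>j. if j \<le> i then mvar j else if j < i + n then 0 else mvar (j + 1 - n))
          (if j < i then mvar j else if j = i then L0 (Sint i n) else mvar (j + n - 1)) = mvar j"
  proof -
    have "(\<Sum>k\<in>Sint i n. if k \<le> i then mvar k else if k < i + n then 0 else mvar (k + 1 - n))
        = (\<Sum>k\<in>Sint i n. if k = i then mvar i else 0)"
      by (rule sum.cong) (use n in \<open>auto simp: Sint_def\<close>)
    also have "\<dots> = mvar i" using i_in_Sint[OF n] fin_Sint by simp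
    moreover have "j > i \<Longrightarrow> \<not> j + n - 1 < i + n \<and> \<not> j + n - 1 \<le> i \<and> j + n - 1 + 1 - n = j" using n by auto
    ultimately show ?thesis using n by (cases "j < i"; cases "j = i") (auto simp: chom_mconst ev_L0)
  qed
qed

lemma goodsubst_sF1:
  assumes n: "n \<ge> 1" shows "goodsubst (sF (Pi_in i n) i n)"
proof (rule goodsubstI[where s'="\<lambda>k. if k < i then mvar k else if k = i then (\<Prod>j\<in>Sint i n. mvar j) else mvar (k + n - 1)"
        and t="\<lambda>j. if j \<le> i then mvar j else if j < i + n then 1 else mvar (j + 1 - n)"])
  fix j
  show "sF (Pi_in i n) i n j = emb (if j < i then mvar j else if j = i then (\<Prod>j\<in>Sint i n. mvar j) else mvar (j + n - 1))"
    by (simp add: sF_def u_emb Pi_in_def rhom_prod[OF rhom_emb])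
  show "ev mconst (\<lambda>j. if j \<le> i then mvar j else if j < i + n then 1 else mvar (j + 1 - n))
          (if j < i then mvar j else if j = i then (\<Prod>j\<in>Sint i n. mvar j) else mvar (j + n - 1)) = mvar j"
  proof -
    have "(\<Prod>k\<in>Sint i n. if k \<le> i then mvar k else if k < i + n then 1 else mvar (k + 1 - n))
        = (\<Prod>k\<in>Sint i n. if k = i then mvar i else 1)"
      by (rule prod.cong) (use n in \<open>auto simp: Sint_def\<close>)
    also have "\<dots> = mvar i" using i_in_Sint[OF n] fin_Sint by simp
    moreover have "j > i \<Longrightarrow> \<not> j + n - 1 < i + n \<and> \<not> j + n - 1 \<le> i \<and> j + n - 1 + 1 - n = j" using n by auto
    ultimately show ?thesis using n by (cases "j < i"; cases "j = i") (auto simp: chom_mconst ev_prod)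
  qed
qed

lemma sF0_blocks: "sF (Sigma_in i n) i n k = (\<Sum>j\<in>ff_blocks i n k. u j)"
  by (simp add: sF_def ff_blocks_def Sigma_in_def)

lemma sF1_blocks: "sF (Pi_in i n) i n k = (\<Prod>j\<in>ff_blocks i n k. u j)"
  by (simp add: sF_def ff_blocks_def Pi_in_def)

lemma ps_sF0: assumes "n \<ge> 1" "finite S"
  shows "poly_subst (sF (Sigma_in i n) i n) (L0 S) = f0 (\<Union>k\<in>S. ff_blocks i n k)"
proof -
  have "poly_subst (sF (Sigma_in i n) i n) (L0 S) = (\<Sum>k\<in>S. \<Sum>j\<in>ff_blocks i n k. u j)"
    by (simp add: ps_L0 sF0_blocks)
  also have "\<dots> = f0 (\<Union>k\<in>S. ff_blocks i n k)"
    unfolding f0_def by (rule sum.UNION_disjoint[symmetric]) (use assms blocks_fin blocks_disj in auto)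
  finally show ?thesis .
qed

lemma ps_sF1: assumes "n \<ge> 1" "finite S"
  shows "poly_subst (sF (Pi_in i n) i n) (L1 S) = f1 (\<Union>k\<in>S. ff_blocks i n k)"
proof -
  have "poly_subst (sF (Pi_in i n) i n) (L1 S) = (\<Prod>k\<in>S. \<Prod>j\<in>ff_blocks i n k. u j) - 1"
    by (simp add: ps_L1 sF1_blocks)
  also have "\<dots> = f1 (\<Union>k\<in>S. ff_blocks i n k)"
    unfolding f1_def by (subst prod.UNION_disjoint) (use assms blocks_fin blocks_disj in auto)
  finally show ?thesis .
qed

lemma ps_shift0: "i \<ge> 1 \<Longrightarrow> poly_subst (\<lambda>j. u (j + i - 1)) (L0 S) = f0 ((\<lambda>j. j + i - 1) ` S)"
  unfolding ps_L0 f0_def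
  by (subst sum.reindex) (use inj_shift in \<open>auto intro: inj_on_subset\<close>)

lemma ps_shift1: "i \<ge> 1 \<Longrightarrow> poly_subst (\<lambda>j. u (j + i - 1)) (L1 S) = f1 ((\<lambda>j. j + i - 1) ` S)"
  unfolding ps_L1 f1_def
  by (subst prod.reindex) (use inj_shift in \<open>auto intro: inj_on_subset\<close>)

lemma comp0:
  assumes n: "n \<ge> 1" and i: "i \<ge> 1" and F: "F \<in> FF m" and G: "G \<in> FF n"
  shows "phi0 (ff_comp i F n G) = mould0_comp i (phi0 F) n (phi0 G)"
proof -
  have gF: "goodsubst (sF (Sigma_in i n) i n)" by (rule goodsubst_sF0[OF n])
  have gG: "goodsubst (\<lambda>j. u (j + i - 1))" using goodsubst_rename[OF inj_shift[OF i]] by simp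
  have eF: "rf_subst (sF (Sigma_in i n) i n) (phi0 F) = (\<Prod>S\<in>ks F. f0 (\<Union>k\<in>S. ff_blocks i n k) powi lk F S)"
    unfolding phi0_eq rf_subst_phi_gen[OF gF f0_emb]
    by (rule prod.cong) (use FF_keys[OF F] ps_sF0[OF n] in auto)
  have eG: "rf_subst (\<lambda>j. u (j + i - 1)) (phi0 G) = (\<Prod>S\<in>ks G. f0 ((\<lambda>j. j + i - 1) ` S) powi lk G S)"
    unfolding phi0_eq rf_subst_phi_gen[OF gG f0_emb]
    by (rule prod.cong) (use ps_shift0[OF i] in auto)
  have lhs: "phi0 (ff_comp i F n G) = f0 (Sint i n) *
           (\<Prod>S\<in>ks F. f0 (\<Union>k\<in>S. ff_blocks i n k) powi lk F S) *
           (\<Prod>S\<in>ks G. f0 ((\<lambda>j. j + i - 1) ` S) powi lk G S)"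
    using phi_comp_lhs[OF f0_nz n F G, where i=i] by (simp add: phi0_eq)
  show ?thesis
    unfolding mould0_comp_def mould_comp_gen_eq eF eG lhs
    by (simp add: Sigma_in_def f0_def)
qed

lemma comp1:
  assumes n: "n \<ge> 1" and i: "i \<ge> 1" and F: "F \<in> FF m" and G: "G \<in> FF n"
  shows "phi1 (ff_comp i F n G) = mould1_comp i (phi1 F) n (phi1 G)"
proof -
  have gF: "goodsubst (sF (Pi_in i n) i n)" by (rule goodsubst_sF1[OF n])
  have gG: "goodsubst (\<lambda>j. u (j + i - 1))" using goodsubst_rename[OF inj_shift[OF i]] by simp
  have eF: "rf_subst (sF (Pi_in i n) i n) (phi1 F) = (\<Prod>S\<in>ks F. f1 (\<Union>k\<in>S. ff_blocks i n k) powi lk F S)"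
    unfolding phi1_eq rf_subst_phi_gen[OF gF f1_emb]
    by (rule prod.cong) (use FF_keys[OF F] ps_sF1[OF n] in auto)
  have eG: "rf_subst (\<lambda>j. u (j + i - 1)) (phi1 G) = (\<Prod>S\<in>ks G. f1 ((\<lambda>j. j + i - 1) ` S) powi lk G S)"
    unfolding phi1_eq rf_subst_phi_gen[OF gG f1_emb]
    by (rule prod.cong) (use ps_shift1[OF i] in auto)
  have lhs: "phi1 (ff_comp i F n G) = f1 (Sint i n) *
           (\<Prod>S\<in>ks F. f1 (\<Union>k\<in>S. ff_blocks i n k) powi lk F S) *
           (\<Prod>S\<in>ks G. f1 ((\<lambda>j. j + i - 1) ` S) powi lk G S)"
    using phi_comp_lhs[OF f1_nz n F G, where i=i] by (simp add: phi1_eq)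
  show ?thesis
    unfolding mould1_comp_def mould_comp_gen_eq eF eG lhs
    by (simp add: Pi_in_def f1_def)
qed

lemma act_gen:
  assumes nz: "\<And>T. finite T \<Longrightarrow> T \<noteq> {} \<Longrightarrow> f T \<noteq> 0"
    and femb: "\<And>S. f S = emb (L S)"
    and psL: "\<And>S. poly_subst (\<lambda>j. u (\<sigma> j)) (L S) = f (\<sigma> ` S)"
    and inj: "inj \<sigma>" and F: "F \<in> FF n"
  shows "phi_gen f (ff_act \<sigma> F) = mould_act \<sigma> (phi_gen f F)"
proof -
  have nz0: "\<forall>S\<in>ks F. f (\<sigma> ` S) \<noteq> 0" using FF_keys[OF F] nz by (metis finite_imageI image_is_empty)
  have g: "goodsubst (\<lambda>j. u (\<sigma> j))" by (rule goodsubst_rename[OF inj])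
  show ?thesis
    unfolding ff_act_def mould_act_def rf_subst_phi_gen[OF g femb] psL
    using phi_gen_rename[of F f "\<lambda>S. \<sigma> ` S", OF nz0] by simp
qed

lemma act0: "\<sigma> permutes {1..n} \<Longrightarrow> F \<in> FF n \<Longrightarrow> phi0 (ff_act \<sigma> F) = mould_act \<sigma> (phi0 F)"
  unfolding phi0_eq
  by (rule act_gen[OF f0_nz f0_emb _ permutes_inj])
     (auto simp: ps_L0 f0_def sum.reindex[OF inj_on_subset[OF permutes_inj]])

lemma act1: "\<sigma> permutes {1..n} \<Longrightarrow> F \<in> FF n \<Longrightarrow> phi1 (ff_act \<sigma> F) = mould_act \<sigma> (phi1 F)"
  unfolding phi1_eq
  by (rule act_gen[OF f1_nz f1_emb _ permutes_inj])
     (auto simp: ps_L1 f1_def prod.reindex[OF inj_on_subset[OF permutes_inj]])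

lemma mvars_0 [simp]: "mvars 0 = {}" by (simp add: mvars_def)
lemma mvars_1 [simp]: "mvars 1 = {}" by (simp add: mvars_def)
lemma mvars_add: "mvars (p + q) \<subseteq> mvars p \<union> mvars q"
  unfolding mvars_def using keys_add[of p q] by blast
lemma mvars_uminus [simp]: "mvars (- p) = mvars p"
  by (simp add: mvars_def)
lemma mvars_diff: "mvars (p - q) \<subseteq> mvars p \<union> mvars q"
  using mvars_add[of p "-q"] by simp
lemma mvars_mult: "mvars (p * q) \<subseteq> mvars p \<union> mvars q"
proof
  fix v assume "v \<in> mvars (p * q)"
  then obtain m where m: "m \<in> ks (p * q)" "v \<in> ks m" by (auto simp: mvars_def)
  then obtain a b where "a \<in> ks p" "b \<in> ks q" "m = a + b" using keys_mult[of p q] by blast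
  thus "v \<in> mvars p \<union> mvars q" using m(2) keys_add[of a b] by (auto simp: mvars_def)
qed
lemma mvars_mvar [simp]: "mvars (mvar j) = {j}"
  by (simp add: mvars_def mvar_def)

lemma mvars_sum: "(\<And>x. x \<in> A \<Longrightarrow> mvars (f x) \<subseteq> V) \<Longrightarrow> mvars (\<Sum>x\<in>A. f x) \<subseteq> V"
  by (induction A rule: infinite_finite_induct) (use mvars_add in fastforce)+

lemma mvars_prod: "(\<And>x. x \<in> A \<Longrightarrow> mvars (f x) \<subseteq> V) \<Longrightarrow> mvars (\<Prod>x\<in>A. f x) \<subseteq> V"
  by (induction A rule: infinite_finite_induct) (use mvars_mult in fastforce)+

lemma mvars_L0: "mvars (L0 S) \<subseteq> S"
  unfolding L0_def by (rule mvars_sum) simp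

lemma mvars_L1: "mvars (L1 S) \<subseteq> S"
  unfolding L1_def using mvars_diff[of "\<Prod>j\<in>S. mvar j" 1] mvars_prod[of S mvar S] by auto

lemma Mould_emb: "mvars p \<subseteq> {1..n} \<Longrightarrow> emb p \<in> Mould n"
  unfolding Mould_def emb_def by (rule CollectI, rule exI[of _ p], rule exI[of _ 1]) simp

lemma Mould_one: "1 \<in> Mould n"
  using Mould_emb[of 1 n] by (simp add: emb_def fract_collapse)

lemma Mould_mult: "x \<in> Mould n \<Longrightarrow> y \<in> Mould n \<Longrightarrow> x * y \<in> Mould n"
  unfolding Mould_def
proof (clarify)
  fix a b c d :: mpoly
  assume "b \<noteq> 0" "mvars a \<subseteq> {1..n}" "mvars b \<subseteq> {1..n}" "d \<noteq> 0" "mvars c \<subseteq> {1..n}" "mvars d \<subseteq> {1..n}"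
  thus "\<exists>a' b'. b' \<noteq> 0 \<and> mvars a' \<subseteq> {1..n} \<and> mvars b' \<subseteq> {1..n} \<and> Fract a b * Fract c d = Fract a' b'"
    using mvars_mult[of a c] mvars_mult[of b d] by (intro exI[of _ "a*c"] exI[of _ "b*d"]) auto
qed

lemma Mould_inverse: "x \<in> Mould n \<Longrightarrow> inverse x \<in> Mould n"
  unfolding Mould_def
proof (clarify)
  fix a b :: mpoly
  assume "b \<noteq> 0" "mvars a \<subseteq> {1..n}" "mvars b \<subseteq> {1..n}"
  thus "\<exists>a' b'. b' \<noteq> 0 \<and> mvars a' \<subseteq> {1..n} \<and> mvars b' \<subseteq> {1..n} \<and> inverse (Fract a b) = Fract a' b'"
  proof (cases "a = 0")
    case True thus ?thesis by (intro exI[of _ 0] exI[of _ 1]) (simp add: fract_collapse)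
  qed auto
qed

lemma Mould_power: "x \<in> Mould n \<Longrightarrow> x ^ k \<in> Mould n"
  by (induction k) (auto intro: Mould_mult Mould_one)

lemma Mould_powi: "x \<in> Mould n \<Longrightarrow> x powi k \<in> Mould n"
  by (auto simp: power_int_def intro: Mould_power Mould_inverse)

lemma Mould_prod: "(\<And>x. x \<in> A \<Longrightarrow> f x \<in> Mould n) \<Longrightarrow> (\<Prod>x\<in>A. f x) \<in> Mould n"
  by (induction A rule: infinite_finite_induct) (auto intro: Mould_mult Mould_one)

lemma Mould_phi:
  assumes "\<And>S. f S = emb (L S)" "\<And>S. mvars (L S) \<subseteq> S" "F \<in> FF n"
  shows "phi_gen f F \<in> Mould n"
  unfolding phi_gen_def
proof (rule Mould_prod, rule Mould_powi)
  fix S assume "S \<in> ks F"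
  hence "S \<subseteq> {1..n}" using FF_keys[OF assms(3)] by blast
  thus "f S \<in> Mould n" using assms(1,2) by (metis Mould_emb order_trans)
qed

lemma powi_split: "(x::'a::field) powi c = x ^ nat c / x ^ nat (- c)"
  by (cases "c \<ge> 0") (auto simp: power_int_def field_simps)

lemma zero_iff_lemma:
  assumes fin: "finite K" and S0: "S0 \<in> K" and z: "(e S0::real) = 0"
    and nz: "\<And>T. T \<in> K \<Longrightarrow> a T > 0 \<Longrightarrow> T \<noteq> S0 \<Longrightarrow> e T \<noteq> 0"
  shows "(\<Prod>T\<in>K. e T ^ a T) = 0 \<longleftrightarrow> a S0 > 0"
proof -
  have "(\<Prod>T\<in>K. e T ^ a T) = 0 \<longleftrightarrow> (\<exists>T\<in>K. e T = 0 \<and> a T > 0)"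
    using fin by (simp add: prod_zero_iff)
  also have "\<dots> \<longleftrightarrow> a S0 > 0" using S0 z nz by blast
  finally show ?thesis .
qed

lemma inj_gen:
  assumes femb: "\<And>S. f S = emb (L S)"
    and nz: "\<And>T. finite T \<Longrightarrow> T \<noteq> {} \<Longrightarrow> f T \<noteq> 0"
    and pt: "\<And>S0. finite S0 \<Longrightarrow> S0 \<noteq> {} \<Longrightarrow> \<exists>x::nat \<Rightarrow> real. ev of_rat x (L S0) = 0 \<and>
                 (\<forall>T. finite T \<longrightarrow> \<not> T \<subseteq> S0 \<longrightarrow> ev of_rat x (L T) \<noteq> 0)"
  shows "inj_on (phi_gen f) (FF n)"
proof (rule inj_onI)
  fix F G assume F: "F \<in> FF n" and G: "G \<in> FF n" and eq: "phi_gen f F = phi_gen f G"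
  define K where "K = ks F \<union> ks G"
  have finK: "finite K" by (simp add: K_def)
  have Kprop: "\<And>S. S \<in> K \<Longrightarrow> finite S \<and> S \<noteq> {}" using FF_keys[OF F] FF_keys[OF G] by (auto simp: K_def)
  have nzK: "\<And>S. S \<in> K \<Longrightarrow> f S \<noteq> 0" using Kprop nz by blast
  define c where "c S = lk F S - lk G S" for S
  have pF: "phi_gen f F = (\<Prod>S\<in>K. f S powi lk F S)" by (rule phi_gen_K) (auto simp: K_def)
  have pG: "phi_gen f G = (\<Prod>S\<in>K. f S powi lk G S)" by (rule phi_gen_K) (auto simp: K_def)
  have pGnz: "phi_gen f G \<noteq> 0" unfolding pG using finK nzK by (simp add: prod_zero_iff)
  have one: "(\<Prod>S\<in>K. f S powi c S) = 1"
  proof -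
    have "(\<Prod>S\<in>K. f S powi c S) = (\<Prod>S\<in>K. f S powi lk F S / f S powi lk G S)"
      by (rule prod.cong) (auto simp: c_def power_int_diff nzK)
    also have "\<dots> = phi_gen f F / phi_gen f G" by (simp add: pF pG prod_dividef)
    also have "\<dots> = 1" using eq pGnz by simp
    finally show ?thesis .
  qed
  have call: "\<forall>S\<in>K. c S = 0"
  proof (rule ccontr)
    assume "\<not> (\<forall>S\<in>K. c S = 0)"
    define Z where "Z = {S\<in>K. c S \<noteq> 0}"
    have Zne: "Z \<noteq> {}" and finZ: "finite Z" using \<open>\<not> (\<forall>S\<in>K. c S = 0)\<close> finK by (auto simp: Z_def)
    define k where "k = Min (card ` Z)"
    have "k \<in> card ` Z" unfolding k_def using Zne finZ by (intro Min_in) auto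
    then obtain S0 where S0Z: "S0 \<in> Z" and cS0: "card S0 = k" by auto
    have kmin: "\<And>T. T \<in> Z \<Longrightarrow> k \<le> card T" unfolding k_def using finZ by (intro Min_le) auto
    have S0K: "S0 \<in> K" and cne: "c S0 \<noteq> 0" using S0Z by (auto simp: Z_def)
    obtain x :: "nat \<Rightarrow> real" where x0: "ev of_rat x (L S0) = 0"
      and xT: "\<And>T. finite T \<Longrightarrow> \<not> T \<subseteq> S0 \<Longrightarrow> ev of_rat x (L T) \<noteq> 0"
      using pt[of S0] Kprop[OF S0K] by blast
    have van: "ev of_rat x (L T) \<noteq> 0" if "T \<in> K" "c T \<noteq> 0" "T \<noteq> S0" for T
    proof -
      have "\<not> T \<subseteq> S0"
      proof
        assume "T \<subseteq> S0"
        hence "T \<subset> S0" using that(3) by auto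
        hence "card T < card S0" using Kprop[OF S0K] by (intro psubset_card_mono) auto
        moreover have "T \<in> Z" using that by (auto simp: Z_def)
        ultimately show False using kmin cS0 by fastforce
      qed
      thus ?thesis using xT Kprop[OF that(1)] by blast
    qed
    define a where "a S = nat (c S)" for S
    define b where "b S = nat (- c S)" for S
    have "(\<Prod>S\<in>K. f S powi c S) = (\<Prod>S\<in>K. f S ^ a S) / (\<Prod>S\<in>K. f S ^ b S)"
      by (simp add: powi_split a_def b_def prod_dividef)
    moreover have "(\<Prod>S\<in>K. f S ^ b S) \<noteq> 0" using finK nzK by (simp add: prod_zero_iff)
    ultimately have "(\<Prod>S\<in>K. f S ^ a S) = (\<Prod>S\<in>K. f S ^ b S)" using one by simp
    hence "emb (\<Prod>S\<in>K. L S ^ a S) = emb (\<Prod>S\<in>K. L S ^ b S)"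
      by (simp add: rhom_prod[OF rhom_emb] rhom_power[OF rhom_emb] femb)
    hence "(\<Prod>S\<in>K. L S ^ a S) = (\<Prod>S\<in>K. L S ^ b S)" by simp
    hence "ev of_rat x (\<Prod>S\<in>K. L S ^ a S) = ev of_rat x (\<Prod>S\<in>K. L S ^ b S)" by (rule arg_cong)
    hence E: "(\<Prod>S\<in>K. ev of_rat x (L S) ^ a S) = (\<Prod>S\<in>K. ev of_rat x (L S) ^ b S)"
      by (simp only: ev_prod[OF chom_of_rat] ev_power[OF chom_of_rat])
    have "(\<Prod>S\<in>K. ev of_rat x (L S) ^ a S) = 0 \<longleftrightarrow> a S0 > 0"
      by (rule zero_iff_lemma[where e="\<lambda>S. ev of_rat x (L S)", OF finK S0K x0]) (use van in \<open>auto simp: a_def\<close>)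
    moreover have "(\<Prod>S\<in>K. ev of_rat x (L S) ^ b S) = 0 \<longleftrightarrow> b S0 > 0"
      by (rule zero_iff_lemma[where e="\<lambda>S. ev of_rat x (L S)", OF finK S0K x0]) (use van in \<open>auto simp: b_def\<close>)
    ultimately have "a S0 > 0 \<longleftrightarrow> b S0 > 0" using E by simp
    thus False using cne by (auto simp: a_def b_def)
  qed
  show "F = G"
  proof (rule poly_mapping_eqI)
    fix S show "lk F S = lk G S"
    proof (cases "S \<in> K")
      case True thus ?thesis using call by (auto simp: c_def)
    next
      case False thus ?thesis by (auto simp: K_def in_keys_iff)
    qed
  qed
qed

lemma pt1:
  assumes "finite S0" "S0 \<noteq> {}"
  shows "\<exists>x::nat \<Rightarrow> real. ev of_rat x (L1 S0) = 0 \<and> (\<forall>T. finite T \<longrightarrow> \<not> T \<subseteq> S0 \<longrightarrow> ev of_rat x (L1 T) \<noteq> 0)"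
proof (intro exI conjI allI impI)
  let ?x = "\<lambda>j. if j \<in> S0 then 1 else 2 :: real"
  show "ev of_rat ?x (L1 S0) = 0" by (simp add: ev_L1 chom_of_rat)
  fix T :: "nat set" assume T: "finite T" "\<not> T \<subseteq> S0"
  have "(\<Prod>j\<in>T. ?x j) = (\<Prod>j\<in>T \<inter> S0. ?x j) * (\<Prod>j\<in>T - S0. ?x j)"
    using T(1) by (metis prod.Int_Diff)
  also have "\<dots> = 2 ^ card (T - S0)" by simp
  finally have e: "(\<Prod>j\<in>T. ?x j) = 2 ^ card (T - S0)" .
  have "card (T - S0) > 0" using T by (auto simp: card_gt_0_iff)
  hence "(2::real) ^ card (T - S0) \<ge> 2 ^ 1" by (intro power_increasing) auto
  thus "ev of_rat ?x (L1 T) \<noteq> 0" by (simp add: ev_L1 chom_of_rat e)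
qed

lemma pt0:
  assumes fin: "finite S0" and ne: "S0 \<noteq> {}"
  shows "\<exists>x::nat \<Rightarrow> real. ev of_rat x (L0 S0) = 0 \<and> (\<forall>T. finite T \<longrightarrow> \<not> T \<subseteq> S0 \<longrightarrow> ev of_rat x (L0 T) \<noteq> 0)"
proof -
  obtain j0 where j0: "j0 \<in> S0" using ne by blast
  define N where "N = real (card S0)"
  have N1: "N \<ge> 1" using fin ne by (simp add: N_def Suc_le_eq card_gt_0_iff)
  define x where "x j = (if j \<in> S0 then (if j = j0 then 1 - N else 1) else N)" for j
  show ?thesis
  proof (intro exI conjI allI impI)
    have "(\<Sum>j\<in>S0. x j) = x j0 + (\<Sum>j\<in>S0 - {j0}. x j)" using fin j0 by (simp add: sum.remove)
    also have "\<dots> = (1 - N) + (N - 1)" proof -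
      have c1: "Suc 0 \<le> card S0" using fin ne by (simp add: Suc_le_eq card_gt_0_iff)
      show ?thesis using j0 fin c1 by (simp add: x_def N_def card_Diff_singleton of_nat_diff)
    qed
    finally show "ev of_rat x (L0 S0) = 0" by (simp add: ev_L0 chom_of_rat)
    fix T :: "nat set" assume T: "finite T" "\<not> T \<subseteq> S0"
    have split: "(\<Sum>j\<in>T. x j) = (\<Sum>j\<in>T \<inter> S0. x j) + (\<Sum>j\<in>T - S0. x j)"
      using T(1) by (metis sum.Int_Diff)
    have "(\<Sum>j\<in>T \<inter> S0. x j) \<ge> (\<Sum>j\<in>T \<inter> S0. if j = j0 then 1 - N else 0)"
      by (rule sum_mono) (auto simp: x_def)
    moreover have "(\<Sum>j\<in>T \<inter> S0. if j = j0 then 1 - N else 0) \<ge> 1 - N"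
      using T(1) N1 by (simp add: sum.delta)
    moreover have "(\<Sum>j\<in>T - S0. x j) = N * card (T - S0)" by (simp add: x_def)
    moreover have "card (T - S0) \<ge> 1" using T by (simp add: Suc_le_eq card_gt_0_iff)
    moreover have "N * card (T - S0) \<ge> N * 1" using N1 \<open>card (T - S0) \<ge> 1\<close> by (intro mult_left_mono) auto
    ultimately have "(\<Sum>j\<in>T. x j) \<ge> 1" using split by linarith
    thus "ev of_rat x (L0 T) \<noteq> 0" by (simp add: ev_L0 chom_of_rat)
  qed
qed

lemma inj0: "inj_on phi0 (FF n)"
  unfolding phi0_eq by (rule inj_gen[OF f0_emb f0_nz pt0])

lemma inj1: "inj_on phi1 (FF n)"
  unfolding phi1_eq by (rule inj_gen[OF f1_emb f1_nz pt1])

theorem mainTheorem2: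
  shows "injective_sym_operad_morphism phi0 mould0_comp \<and>
         injective_sym_operad_morphism phi1 mould1_comp"
proof -
  have m0: "\<forall>n\<ge>1. \<forall>F\<in>FF n. phi0 F \<in> Mould n"
    unfolding phi0_eq using Mould_phi[OF f0_emb mvars_L0] by blast
  have m1: "\<forall>n\<ge>1. \<forall>F\<in>FF n. phi1 F \<in> Mould n"
    unfolding phi1_eq using Mould_phi[OF f1_emb mvars_L1] by blast
  have z: "phi0 0 = 1" "phi1 0 = 1" by (simp_all add: phi0_eq phi1_eq)
  show ?thesis
    unfolding injective_sym_operad_morphism_def
    using m0 m1 z comp0 comp1 act0 act1 inj0 inj1 by auto
qed

end
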